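(* Let $q\ge3$ be a prime power, $1\le d\le e$, $0\le i\le d$, $1\le j\le d$, $h_{\max}=\min\{j,d-i\}$, and $s=b_{h_{\max}}(i,j)$. Then $$\tfrac14 q^{s}<|B_j(i)|<2q^{s}.$$
   Context: For integers $m\ge 0$ and $l$, ${m\brack l}=\prod_{t=1}^{l}\frac{q^{m-t+1}-1}{q^t-1}$ for $l\ge0$ and $0$ for $l<0$. For $0\le i,j\le d$, $$B_j(i)=\sum_{h=0}^{\min\{j,d-i\}}(-1)^{j-h}q^{eh+\binom{j-h}{2}}{d-h\brack d-j}{d-i\brack h}$$ (the eigenvalues of the bilinear forms graph $H_q(d,e,j)$ on $d\times e$ matrices over $\mathbb F_q$, adjacency meaning the difference has rank $j$). Also $b_h(i,j)=h(d+e-i-h)+(d-j)(j-h)+\binom{j-h}{2}$. *)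

theory Defs
  imports Complex_Main "HOL-Computational_Algebra.Primes"
begin

text \<open>Gaussian binomial coefficient [m l]_q for m, l >= 0 (real-valued).
  The factor q^(m+1-t) - 1 vanishes at t = m+1, so it is 0 when l > m.\<close>
definition gauss_binom :: "nat \<Rightarrow> nat \<Rightarrow> nat \<Rightarrow> real" where
  "gauss_binom q m l = (\<Prod>t=1..l. (real q ^ (m + 1 - t) - 1) / (real q ^ t - 1))"

text \<open>Eigenvalue B_j(i) of the bilinear forms graph H_q(d,e,j).\<close>
definition bilin_eig :: "nat \<Rightarrow> nat \<Rightarrow> nat \<Rightarrow> nat \<Rightarrow> nat \<Rightarrow> real" where
  "bilin_eig q d e j i =
     (\<Sum>h=0..min j (d - i).
        (-1) ^ (j - h) * real q ^ (e * h + ((j - h) choose 2))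
        * gauss_binom q (d - h) (d - j) * gauss_binom q (d - i) h)"

definition b_exp :: "nat \<Rightarrow> nat \<Rightarrow> nat \<Rightarrow> nat \<Rightarrow> nat \<Rightarrow> nat" where
  "b_exp d e h i j = h * (d + e - i - h) + (d - j) * (j - h) + ((j - h) choose 2)"

end

theory Submission
  imports Defs
begin

lemma gb_0[simp]: "gauss_binom q m 0 = 1"
  by (simp add: gauss_binom_def)

lemma gb_Suc: "gauss_binom q m (Suc l) = gauss_binom q m l * ((real q ^ (m - l) - 1) / (real q ^ Suc l - 1))"
  by (simp add: gauss_binom_def prod.cl_ivl_Suc)

lemma gb_nonneg: "q \<ge> 1 \<Longrightarrow> 0 \<le> gauss_binom q m l"
  unfolding gauss_binom_def
  by (intro prod_nonneg ballI divide_nonneg_nonneg) (simp_all add: one_le_power)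

lemma gb_up:
  assumes "q \<ge> 2" "l \<le> m"
  shows "gauss_binom q (Suc m) l * (real q ^ (Suc m - l) - 1) = gauss_binom q m l * (real q ^ Suc m - 1)"
  using assms(2)
proof (induction l)
  case 0 then show ?case by simp
next
  case (Suc l)
  have IH: "gauss_binom q (Suc m) l * (real q ^ (Suc m - l) - 1) = gauss_binom q m l * (real q ^ Suc m - 1)"
    using Suc by simp
  have e: "Suc m - Suc l = m - l" by simp
  have "gauss_binom q (Suc m) (Suc l) * (real q ^ (Suc m - Suc l) - 1)
      = (gauss_binom q (Suc m) l * (real q ^ (Suc m - l) - 1)) * (real q ^ (m - l) - 1) / (real q ^ Suc l - 1)"
    by (simp add: gb_Suc e)
  also have "\<dots> = gauss_binom q m l * (real q ^ Suc m - 1) * (real q ^ (m - l) - 1) / (real q ^ Suc l - 1)"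
    by (simp add: IH)
  also have "\<dots> = gauss_binom q m (Suc l) * (real q ^ Suc m - 1)"
    by (simp add: gb_Suc)
  finally show ?case .
qed

lemma qpow_gt1: "q \<ge> 2 \<Longrightarrow> n \<ge> 1 \<Longrightarrow> real q ^ n > 1"
  by (simp add: one_less_power)

lemma gb_diag: assumes "q \<ge> 2" shows "gauss_binom q m m = 1"
proof (induction m)
  case 0 then show ?case by simp
next
  case (Suc m)
  have u: "gauss_binom q (Suc m) m * (real q - 1) = real q ^ Suc m - 1"
    using gb_up[OF assms, of m m] Suc by simp
  have ne: "real q ^ Suc m - 1 \<noteq> 0" using qpow_gt1[OF assms, of "Suc m"] by simp
  have "gauss_binom q (Suc m) (Suc m) = gauss_binom q (Suc m) m * (real q - 1) / (real q ^ Suc m - 1)"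
    by (simp add: gb_Suc)
  also have "\<dots> = 1" using u ne by simp
  finally show ?case .
qed

lemma gb_diagstep:
  assumes "q \<ge> 2"
  shows "gauss_binom q (k + Suc l) (Suc l) = gauss_binom q (k + l) l * ((real q ^ Suc (k + l) - 1) / (real q ^ Suc l - 1))"
proof -
  have u: "gauss_binom q (Suc (k+l)) l * (real q ^ Suc k - 1) = gauss_binom q (k+l) l * (real q ^ Suc (k+l) - 1)"
    using gb_up[OF assms, of l "k+l"] by (simp add: Suc_diff_le)
  have "gauss_binom q (k + Suc l) (Suc l) = gauss_binom q (Suc (k+l)) l * (real q ^ Suc k - 1) / (real q ^ Suc l - 1)"
    by (simp add: gb_Suc)
  also have "\<dots> = gauss_binom q (k + l) l * ((real q ^ Suc (k + l) - 1) / (real q ^ Suc l - 1))"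
    using u by simp
  finally show ?thesis .
qed

definition Qp :: "nat \<Rightarrow> nat \<Rightarrow> real" where
  "Qp q l = (\<Prod>a=1..l. (1 - 1 / real q ^ a))"

lemma Qp_bound: assumes "q \<ge> 3" shows "Qp q l \<ge> 1/2 + 1 / (2 * real q ^ l)"
proof (induction l)
  case 0 then show ?case by (simp add: Qp_def)
next
  case (Suc l)
  define x where "x = 1 / real q ^ l"
  have x0: "0 \<le> x" and x1: "x \<le> 1" using assms by (auto simp: x_def)
  have Qs: "Qp q (Suc l) = Qp q l * (1 - x / real q)"
    by (simp add: Qp_def prod.cl_ivl_Suc x_def)
  have f: "1 - x / real q \<ge> 0" using assms x1 by (simp add: field_simps)
  have "Qp q (Suc l) \<ge> (1/2 + x/2) * (1 - x / real q)"
    using Suc f unfolding Qs x_def by (intro mult_right_mono) auto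
  moreover have "(1/2 + x/2) * (1 - x / real q) \<ge> 1/2 + x / (2 * real q)"
  proof -
    have q: "real q \<ge> 3" using assms by simp
    have "x * (real q - 2 - x) \<ge> 0" using x0 x1 q by simp
    then have "2 * real q * (x * (real q - 2 - x)) \<ge> 0" using q by simp
    then show ?thesis using q by (simp add: field_simps)
  qed
  ultimately show ?case by (simp add: x_def mult_ac)
qed

lemma gb_bounds:
  assumes "q \<ge> 3"
  shows "real q ^ (k*l) \<le> gauss_binom q (k+l) l \<and> gauss_binom q (k+l) l * Qp q l \<le> real q ^ (k*l)"
proof (induction l)
  case 0 then show ?case by (simp add: Qp_def)
next
  case (Suc l)
  define Q where "Q = real q"
  have Q3: "Q \<ge> 3" using assms by (simp add: Q_def)
  define G where "G = gauss_binom q (k+l) l"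
  define A where "A = Q ^ Suc (k+l)"
  define B where "B = Q ^ Suc l"
  have B1: "B > 1" unfolding B_def by (rule one_less_power) (use Q3 in auto)
  have AB: "A = Q^k * B" by (simp add: A_def B_def power_add[symmetric])
  have Qk: "Q^k \<ge> 1" using Q3 by (simp add: one_le_power)
  have step: "gauss_binom q (k + Suc l) (Suc l) = G * ((A - 1) / (B - 1))"
    using gb_diagstep[of q k l] assms by (simp add: G_def A_def B_def Q_def)
  have Qps0: "Qp q (Suc l) = Qp q l * (1 - 1 / B)"
    by (simp add: Qp_def prod.cl_ivl_Suc B_def Q_def)
  have "1 - 1 / B = (B - 1) / B" using B1 by (simp add: field_simps)
  then have Qps: "Qp q (Suc l) = Qp q l * ((B - 1) / B)" using Qps0 by simp
  have IH1: "Q ^ (k*l) \<le> G" and IH2: "G * Qp q l \<le> Q ^ (k*l)" using Suc by (auto simp: G_def Q_def)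
  have G0: "G \<ge> 0" using IH1 Q3 by (meson order.trans zero_le_power le_less_trans less_le_not_le zero_less_numeral less_le order_trans) 
  have F: "(A - 1) / (B - 1) \<ge> Q^k"
    using B1 Qk by (simp add: AB field_simps)
  have e: "Q ^ (k * Suc l) = Q^(k*l) * Q^k" by (simp add: power_add)
  have low: "Q ^ (k * Suc l) \<le> G * ((A - 1) / (B - 1))"
    unfolding e using IH1 F Qk G0 by (intro mult_mono) auto
  have "G * ((A - 1) / (B - 1)) * Qp q (Suc l) = (G * Qp q l) * ((A - 1) / B)"
    using B1 by (simp add: Qps field_simps)
  also have "\<dots> \<le> Q^(k*l) * Q^k"
  proof (rule mult_mono[OF IH2])
    show "(A - 1) / B \<le> Q^k" using B1 by (simp add: AB field_simps)
    show "0 \<le> Q^(k*l)" using Q3 by simp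
    have "A \<ge> 1" unfolding A_def by (rule one_le_power) (use Q3 in auto)
    then show "0 \<le> (A - 1) / B" using B1 by simp
  qed
  finally show ?case using low step e by (simp add: Q_def)
qed

lemma gb_bounds2:
  assumes "q \<ge> 3" "l \<le> m"
  shows "real q ^ (l*(m-l)) \<le> gauss_binom q m l \<and> gauss_binom q m l < 2 * real q ^ (l*(m-l))"
proof -
  obtain k where m: "m = k + l" using assms(2) by (metis le_add_diff_inverse2)
  have b: "real q ^ (k*l) \<le> gauss_binom q (k+l) l" "gauss_binom q (k+l) l * Qp q l \<le> real q ^ (k*l)"
    using gb_bounds[OF assms(1)] by auto
  have e: "l*(m-l) = k*l" using m by simp
  have up: "gauss_binom q (k+l) l < 2 * real q ^ (k*l)"
  proof (cases "l = 0")
    case True then show ?thesis by simp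
  next
    case False
    have "1 / (2 * real q ^ l) > 0" using assms by simp
    then have Qh: "Qp q l > 1/2" using Qp_bound[OF assms(1), of l] by linarith
    have "gauss_binom q (k+l) l * (1/2) < gauss_binom q (k+l) l * Qp q l"
    proof (rule mult_strict_left_mono[OF Qh])
      have "real q ^ (k*l) > 0" using assms by simp
      then show "gauss_binom q (k+l) l > 0" using b(1) by linarith
    qed
    then show ?thesis using b(2) by linarith
  qed
  show ?thesis using b up unfolding e m by (simp add: mult.commute)
qed

lemma alt_sum:
  fixes a :: "nat \<Rightarrow> real"
  assumes "0 \<le> a 0" "\<And>h. h < n \<Longrightarrow> a h \<le> a (Suc h)"
  shows "0 \<le> (\<Sum>h=0..n. (-1)^(n-h) * a h) \<and> (\<Sum>h=0..n. (-1)^(n-h) * a h) \<le> a n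
     \<and> (n \<ge> 1 \<longrightarrow> a n - a (n - 1) \<le> (\<Sum>h=0..n. (-1)^(n-h) * a h))"
  using assms(2)
proof (induction n)
  case 0 then show ?case using assms(1) by simp
next
  case (Suc n)
  have rec: "(\<Sum>h=0..Suc n. (-1)^(Suc n-h) * a h) = a (Suc n) - (\<Sum>h=0..n. (-1)^(n-h) * a h)"
  proof -
    have "(\<Sum>h=0..n. (-1)^(Suc n-h) * a h) = - (\<Sum>h=0..n. (-1)^(n-h) * a h)"
      by (simp add: sum_negf[symmetric] Suc_diff_le)
    then show ?thesis by (simp add: sum.atLeast0_atMost_Suc)
  qed
  have IH: "0 \<le> (\<Sum>h=0..n. (-1)^(n-h) * a h)" "(\<Sum>h=0..n. (-1)^(n-h) * a h) \<le> a n"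
    using Suc by auto
  have "a n \<le> a (Suc n)" using Suc.prems by simp
  then show ?case using rec IH by simp
qed

lemma key_ineq:
  fixes Q t u v w z E :: real
  assumes "Q \<ge> 3" "t \<ge> 1" "u = t * Q" "v \<ge> Q" "w > 1" "z > 1" "w * z \<le> E * v"
  shows "t * (w - 1) * (z - 1) < 3/4 * (E * (u - 1) * (v - 1))"
proof -
  have "(w - 1) * (z - 1) < w * z" using assms by (simp add: algebra_simps)
  then have 1: "t * (w - 1) * (z - 1) < t * (w * z)" using assms(2) by (simp add: mult.assoc)
  have 2: "t * (w * z) \<le> t * (E * v)" using assms by simp
  have E0: "E \<ge> 0"
  proof -
    have "w * z > 0" using assms by simp
    then have "E * v > 0" using assms by linarith
    then show ?thesis using assms by (simp add: zero_less_mult_iff)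
  qed
  have "(3*Q-1)*(Q-3) \<ge> 0" using assms(1) by (intro mult_nonneg_nonneg) auto
  then have q: "3/4 * (Q - 1)^2 \<ge> Q" by (simp add: power2_eq_square algebra_simps)
  have u1: "u - 1 \<ge> t * (Q - 1)" using assms by (simp add: algebra_simps)
  have v1: "Q * (v - 1) \<ge> v * (Q - 1)" using assms by (simp add: algebra_simps)
  have "Q * (t * (E * v)) \<le> 3/4 * (Q - 1)^2 * (t * (E * v))"
    using q assms E0 by (intro mult_right_mono) auto
  also have "\<dots> = 3/4 * E * (t * (Q - 1)) * (v * (Q - 1))" by (simp add: power2_eq_square algebra_simps)
  also have "\<dots> \<le> 3/4 * E * (u - 1) * (Q * (v - 1))"
  proof (rule mult_mono)
    show "3/4 * E * (t * (Q - 1)) \<le> 3/4 * E * (u - 1)" using u1 E0 by (intro mult_left_mono) auto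
    show "v * (Q - 1) \<le> Q * (v - 1)" by (rule v1)
    have "u - 1 \<ge> 0" using u1 assms by (smt (verit) mult_nonneg_nonneg)
    then show "0 \<le> 3/4 * E * (u - 1)" using E0 by simp
    show "0 \<le> v * (Q - 1)" using assms by simp
  qed
  finally have f: "Q * (t * (E * v)) \<le> 3/4 * E * (u - 1) * (Q * (v - 1))" .
  have "3/4 * E * (u - 1) * (Q * (v - 1)) = Q * (3/4 * (E * (u - 1) * (v - 1)))" by (simp only: ac_simps)
  then have "Q * (t * (E * v)) \<le> Q * (3/4 * (E * (u - 1) * (v - 1)))" using f by linarith
  then have 3: "t * (E * v) \<le> 3/4 * (E * (u - 1) * (v - 1))" using assms(1) by simp
  show ?thesis using 1 2 3 by linarith
qed

lemma choose2_Suc: "(Suc n choose 2) = n + (n choose 2)"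
  by (simp add: numeral_2_eq_2)

lemma top_aux:
  fixes Q G :: real
  assumes "Q > 0" "Q ^ g \<le> G" "G < 2 * Q ^ g" "p + g = s"
  shows "Q ^ s \<le> Q ^ p * G \<and> Q ^ p * G < 2 * Q ^ s"
proof -
  have qs: "Q ^ s = Q ^ p * Q ^ g" using assms(4) by (simp add: power_add[symmetric])
  have p: "Q ^ p > 0" using assms by simp
  show ?thesis unfolding qs using assms p by (auto intro: mult_left_mono simp: mult.left_commute)
qed

theorem lemma4p2:
  fixes q d e i j :: nat
  assumes "\<exists>p k. prime p \<and> k \<ge> 1 \<and> q = p ^ k"
    and "q \<ge> 3"
    and "1 \<le> d" and "d \<le> e"
    and "i \<le> d"
    and "1 \<le> j" and "j \<le> d"
  shows "(1/4) * real q ^ b_exp d e (min j (d - i)) i j < \<bar>bilin_eig q d e j i\<bar>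
       \<and> \<bar>bilin_eig q d e j i\<bar> < 2 * real q ^ b_exp d e (min j (d - i)) i j"
proof -
  define Q where "Q = real q"
  have Q3: "Q \<ge> 3" using assms(2) by (simp add: Q_def)
  define H where "H = min j (d - i)"
  define s where "s = b_exp d e H i j"
  define a where "a h = Q ^ (e * h + ((j - h) choose 2)) * gauss_binom q (d - h) (d - j) * gauss_binom q (d - i) h" for h
  define S where "S = (\<Sum>h=0..H. (-1)^(H-h) * a h)"
  have eig: "bilin_eig q d e j i = (-1)^(j-H) * S"
  proof -
    have "bilin_eig q d e j i = (\<Sum>h=0..H. (-1)^(j-H) * ((-1)^(H-h) * a h))"
      unfolding bilin_eig_def H_def[symmetric]
    proof (rule sum.cong[OF refl])
      fix h assume "h \<in> {0..H}"
      then have "j - h = (j - H) + (H - h)" using H_def by auto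
      then have "(-1::real)^(j-h) = (-1)^(j-H) * (-1)^(H-h)" by (simp add: power_add)
      then show "(-1) ^ (j - h) * real q ^ (e * h + (j - h choose 2)) * gauss_binom q (d - h) (d - j) *
         gauss_binom q (d - i) h = (-1)^(j-H) * ((-1)^(H-h) * a h)"
        by (simp add: a_def Q_def)
    qed
    then show ?thesis by (simp add: S_def sum_distrib_left)
  qed
  have absS: "\<bar>bilin_eig q d e j i\<bar> = \<bar>S\<bar>" unfolding eig by (simp add: abs_mult)
  have gb0: "\<And>m l. gauss_binom q m l \<ge> 0" using assms(2) by (intro gb_nonneg) auto
  have a0: "\<And>h. a h \<ge> 0" unfolding a_def using Q3 gb0 by simp
  have ratio: "a h < 3/4 * a (Suc h)" if hH: "h < H" for h
  proof -
    have hj: "Suc h \<le> j" and hdi: "i + Suc h \<le> d" using hH H_def by auto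
    define t where "t = Q ^ (j - Suc h)"
    define u where "u = Q ^ (j - h)"
    define v where "v = Q ^ (d - i - h)"
    define w where "w = Q ^ (d - h)"
    define z where "z = Q ^ Suc h"
    define E where "E = Q ^ e"
    define g1 where "g1 = gauss_binom q (d - h) (d - j)"
    define g1' where "g1' = gauss_binom q (d - Suc h) (d - j)"
    define g2 where "g2 = gauss_binom q (d - i) h"
    define g2' where "g2' = gauss_binom q (d - i) (Suc h)"
    define P where "P = Q ^ (e * h + ((j - h) choose 2))"
    define P' where "P' = Q ^ (e * Suc h + ((j - Suc h) choose 2))"
    have ah: "a h = P * g1 * g2" by (simp add: a_def P_def g1_def g2_def)
    have ah': "a (Suc h) = P' * g1' * g2'" by (simp add: a_def P'_def g1'_def g2'_def)
    have A: "g1 * (u - 1) = g1' * (w - 1)"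
    proof -
      have "Suc (d - Suc h) = d - h" "Suc (d - Suc h) - (d - j) = j - h" "d - (h + (d - j)) = j - h"
        using hj hdi assms(7) by auto
      then show ?thesis using gb_up[of q "d - j" "d - Suc h"] assms(2) hj hdi
        by (simp add: g1_def g1'_def u_def w_def Q_def)
    qed
    have z1: "z > 1" unfolding z_def by (rule one_less_power) (use Q3 in auto)
    have B: "g2' * (z - 1) = g2 * (v - 1)"
      using z1 by (simp add: g2_def g2'_def gb_Suc z_def v_def Q_def diff_diff_left)
    have C: "P * E = P' * t"
    proof -
      have js: "j - h = Suc (j - Suc h)" using hj by simp
      have "e * h + ((j - h) choose 2) + e = e * Suc h + ((j - Suc h) choose 2) + (j - Suc h)"
        unfolding js choose2_Suc by simp
      then show ?thesis unfolding P_def E_def P'_def t_def power_add[symmetric] by (metis add.assoc)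
    qed
    have t1: "t \<ge> 1" unfolding t_def by (rule one_le_power) (use Q3 in auto)
    have ut: "u = t * Q" unfolding u_def t_def using hj
      by (metis Suc_diff_le diff_Suc_Suc mult.commute power_Suc)
    have vQ: "v \<ge> Q" unfolding v_def using power_increasing[of 1 "d - i - h" Q] Q3 hdi by simp
    have w1: "w > 1" unfolding w_def by (rule one_less_power) (use Q3 hdi in auto)
    have wz: "w * z \<le> E * v"
    proof -
      have "w * z = Q ^ (d - h + Suc h)" by (simp add: w_def z_def power_add)
      also have "\<dots> \<le> Q ^ (e + (d - i - h))" using Q3 hdi assms(4) by (intro power_increasing) auto
      also have "\<dots> = E * v" by (simp add: E_def v_def power_add)
      finally show ?thesis .
    qed
    have key: "t * (w - 1) * (z - 1) < 3/4 * (E * (u - 1) * (v - 1))"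
      by (rule key_ineq[OF Q3 t1 ut vQ w1 z1 wz])
    have eq: "a h * (E * (u - 1) * (v - 1)) = a (Suc h) * (t * (w - 1) * (z - 1))"
    proof -
      have "a h * (E * (u - 1) * (v - 1)) = (P * E) * (g1 * (u - 1)) * (g2 * (v - 1))"
        by (simp add: ah ac_simps)
      also have "\<dots> = (P' * t) * (g1' * (w - 1)) * (g2' * (z - 1))" by (simp add: A B C)
      also have "\<dots> = a (Suc h) * (t * (w - 1) * (z - 1))" by (simp add: ah' ac_simps)
      finally show ?thesis .
    qed
    have P'0: "P' > 0" using Q3 by (simp add: P'_def)
    have g1'0: "g1' > 0"
    proof -
      have le: "d - j \<le> d - Suc h" using hj by simp
      have "real q ^ ((d - j) * (d - Suc h - (d - j))) \<le> g1'"
        unfolding g1'_def by (rule conjunct1[OF gb_bounds2[OF assms(2) le]])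
      moreover have "real q ^ ((d - j) * (d - Suc h - (d - j))) > 0" using assms(2) by simp
      ultimately show ?thesis by linarith
    qed
    have g2'0: "g2' > 0"
    proof -
      have le: "Suc h \<le> d - i" using hdi by simp
      have "real q ^ (Suc h * (d - i - Suc h)) \<le> g2'"
        unfolding g2'_def by (rule conjunct1[OF gb_bounds2[OF assms(2) le]])
      moreover have "real q ^ (Suc h * (d - i - Suc h)) > 0" using assms(2) by simp
      ultimately show ?thesis by linarith
    qed
    have as0: "a (Suc h) > 0" using P'0 g1'0 g2'0 ah' by simp
    have X0: "E * (u - 1) * (v - 1) > 0"
    proof -
      have "E > 0" using Q3 by (simp add: E_def)
      moreover have "u - 1 > 0"
      proof -
        have "t * Q \<ge> 1 * Q" using t1 Q3 by (intro mult_right_mono) auto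
        then show ?thesis using ut Q3 by linarith
      qed
      moreover have "v - 1 > 0" using vQ Q3 by simp
      ultimately show ?thesis by simp
    qed
    have "a h * (E * (u - 1) * (v - 1)) < (3/4 * a (Suc h)) * (E * (u - 1) * (v - 1))"
      unfolding eq using key as0 by (simp add: mult.assoc)
    then show ?thesis using X0 by (meson mult_less_cancel_right_pos)
  qed
  have mono: "a h \<le> a (Suc h)" if "h < H" for h
    using ratio[OF that] a0[of "Suc h"] by linarith
  have alt: "0 \<le> S" "S \<le> a H" "H \<ge> 1 \<longrightarrow> a H - a (H - 1) \<le> S"
    using alt_sum[of a H, OF a0 mono] by (auto simp: S_def)
  have top: "Q ^ s \<le> a H \<and> a H < 2 * Q ^ s"
  proof (cases "j \<le> d - i")
    case True
    then have HJ: "H = j" by (simp add: H_def)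
    define r where "r = d - i - j"
    have r: "d = i + j + r" using True assms(5) by (simp add: r_def)
    have aH: "a H = Q ^ (e * j) * gauss_binom q (d - i) j"
      unfolding a_def HJ using gb_diag[of q "d - j"] assms(2) by (simp add: numeral_2_eq_2)
    have gb: "Q ^ (j * (d - i - j)) \<le> gauss_binom q (d - i) j \<and> gauss_binom q (d - i) j < 2 * Q ^ (j * (d - i - j))"
      using gb_bounds2[of q j "d - i"] assms(2) True by (simp add: Q_def)
    have "e * j + j * (d - i - j) = s" unfolding s_def b_exp_def HJ r by (simp add: algebra_simps)
    then show ?thesis unfolding aH using top_aux[of Q "j * (d - i - j)" "gauss_binom q (d - i) j" "e * j" s] gb Q3 by simp
  next
    case False
    then have HJ: "H = d - i" by (simp add: H_def)
    define c where "c = j - (d - i)"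
    have c: "j = d - i + c" "c \<ge> 1" using False by (auto simp: c_def)
    have dj: "d - j \<le> i" using c assms(5) assms(7) by linarith
    have aH: "a H = Q ^ (e * (d - i) + ((j - (d - i)) choose 2)) * gauss_binom q i (d - j)"
      unfolding a_def HJ using gb_diag[of q "d - i"] assms(2) assms(5) by (simp add: diff_diff_cancel)
    have gb: "Q ^ ((d - j) * (i - (d - j))) \<le> gauss_binom q i (d - j) \<and> gauss_binom q i (d - j) < 2 * Q ^ ((d - j) * (i - (d - j)))"
      using gb_bounds2[of q "d - j" i] assms(2) dj by (simp add: Q_def)
    have "e * (d - i) + ((j - (d - i)) choose 2) + (d - j) * (i - (d - j)) = s"
    proof -
      define a0 where "a0 = d - i"
      define r where "r = i - c"
      have i: "i = c + r" and d: "d = a0 + c + r" and jj: "j = a0 + c"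
        using assms(5) assms(7) c by (auto simp: a0_def r_def)
      show ?thesis unfolding s_def b_exp_def HJ unfolding d i jj by (simp add: algebra_simps)
    qed
    then show ?thesis unfolding aH using top_aux[of Q "(d - j) * (i - (d - j))" "gauss_binom q i (d - j)" _ s] gb Q3 by simp
  qed
  have qs0: "Q ^ s > 0" using Q3 by simp
  have low: "1/4 * Q ^ s < S"
  proof (cases "H = 0")
    case True
    then have "S = a 0" by (simp add: S_def)
    then show ?thesis using top True qs0 by simp
  next
    case False
    then have "a (H - 1) < 3/4 * a H" using ratio[of "H - 1"] by simp
    then show ?thesis using alt top False by simp
  qed
  show ?thesis using low alt top absS
    unfolding s_def H_def[symmetric] Q_def[symmetric] by simp
qed

end
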